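(* The operator $\frac1\lambda P$ maps $\Delta_f$ into itself.
   Context: Let $I=[0,1)$ carry a metric $d_I$, fix $\theta\in(0,1)$, and let $\Omega=I^{\mathbb Z}$ with metric $d(x,y)=\sup_{k\in\mathbb Z}\theta^{|k|}d_I(x_k,y_k)$. Let $\tau:I\to I$ have full branches, so that $b=\#\tau^{-1}(t)$ is constant; let $p_\tau$ be a fixed point of $\tau$. Assume there is $\eta\in(0,1)$ such that every inverse branch $\zeta$ of $\tau$ satisfies $d_I(\zeta(s),\zeta(t))\le\eta\,d_I(s,t)$. Let $(\bar\tau x)_i=\tau(x_i)$. Let $\pi_k:\Omega\to\Omega$ keep the coordinates $|i|\le k$ and set the others to $p_\tau$; $\Phi_k=\Phi\circ\pi_k$. Fix $\beta\in(0,1]$; $|\Phi|_\infty=\sup|\Phi|$, $|\Phi|_\beta=\sup_{k\in\mathbb N}\sup_{x\neq y}|\Phi_k(x)-\Phi_k(y)|/d(x,y)^\beta$, $\|\Phi\|=|\Phi|_\infty+|\Phi|_\beta$, $\mathcal C=\{\Phi\in C(\Omega):\|\Phi\|<\infty\}$. An inverse branch of order $k$ is a choice $\zeta=(\zeta_j)_{|j|\le k}$ of inverse branches of $\tau$, with $(\zeta_x)_j=\zeta_j(x_j)$ for $|j|\le k$, $(\zeta_x)_j=x_j$ otherwise; $b_k=b^{2k+1}$. For real $f\in\mathcal C$, $P_k\Phi(x)=b_k^{-1}\sum_{|\zeta|=k}e^{f(\pi_k\zeta_x)}\Phi(\pi_k\zeta_x)$ and $P\Phi=\lim_kP_k\Phi$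 pointwise. Fix a Borel probability measure $\nu_0$ on $\Omega$ with $P^*\nu_0=\lambda\nu_0$, where $\lambda=\int P\mathbf 1\,d\nu_0$ (such exists). Put $B(z)=\exp\!\left(|f|_\beta\frac{\eta^\beta}{1-\eta^\beta}z^\beta\right)$ for $z\ge0$ and $\Delta_f=\{\Phi\in C(\Omega):\Phi\ge0,\ \nu_0(\Phi)=1,\ \Phi(x)\le B(d(x,y))\Phi(y)\ \forall x,y\in\Omega\}$. *)

theory Defs
  imports "HOL-Analysis.Analysis" "HOL-Probability.Probability"
begin

definition Iset :: "real set" where
  "Iset = {0..<1}"

definition Omega :: "(int \<Rightarrow> real) set" where
  "Omega = {x. \<forall>i. x i \<in> Iset}"

definition metric_on_I :: "(real \<Rightarrow> real \<Rightarrow> real) \<Rightarrow> bool" where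
  "metric_on_I dI \<longleftrightarrow>
     (\<forall>s\<in>Iset. \<forall>t\<in>Iset. 0 \<le> dI s t \<and> dI s t = dI t s \<and> (dI s t = 0 \<longleftrightarrow> s = t)) \<and>
     (\<forall>s\<in>Iset. \<forall>t\<in>Iset. \<forall>u\<in>Iset. dI s u \<le> dI s t + dI t u)"

definition dOm :: "(real \<Rightarrow> real \<Rightarrow> real) \<Rightarrow> real \<Rightarrow> (int \<Rightarrow> real) \<Rightarrow> (int \<Rightarrow> real) \<Rightarrow> real" where
  "dOm dI \<theta> x y = (if x \<in> Omega \<and> y \<in> Omega then (SUP k. \<theta> ^ nat \<bar>k\<bar> * dI (x k) (y k)) else 0)"

definition Otop :: "(real \<Rightarrow> real \<Rightarrow> real) \<Rightarrow> real \<Rightarrow> (int \<Rightarrow> real) topology" where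
  "Otop dI \<theta> = Metric_space.mtopology Omega (dOm dI \<theta>)"

definition Ccont :: "(real \<Rightarrow> real \<Rightarrow> real) \<Rightarrow> real \<Rightarrow> ((int \<Rightarrow> real) \<Rightarrow> real) set" where
  "Ccont dI \<theta> = {\<Phi>. continuous_map (Otop dI \<theta>) euclideanreal \<Phi>}"

definition proj :: "real \<Rightarrow> nat \<Rightarrow> (int \<Rightarrow> real) \<Rightarrow> (int \<Rightarrow> real)" where
  "proj p k x = (\<lambda>i. if \<bar>i\<bar> \<le> int k then x i else p)"

definition holder_quots ::
  "(real \<Rightarrow> real \<Rightarrow> real) \<Rightarrow> real \<Rightarrow> real \<Rightarrow> real \<Rightarrow> ((int \<Rightarrow> real) \<Rightarrow> real) \<Rightarrow> real set" where
  "holder_quots dI \<theta> p \<beta> \<Phi> =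
     {\<bar>\<Phi> (proj p k x) - \<Phi> (proj p k y)\<bar> / (dOm dI \<theta> x y) powr \<beta> | k x y.
        x \<in> Omega \<and> y \<in> Omega \<and> x \<noteq> y}"

definition holder_semi ::
  "(real \<Rightarrow> real \<Rightarrow> real) \<Rightarrow> real \<Rightarrow> real \<Rightarrow> real \<Rightarrow> ((int \<Rightarrow> real) \<Rightarrow> real) \<Rightarrow> real" where
  "holder_semi dI \<theta> p \<beta> \<Phi> = Sup (holder_quots dI \<theta> p \<beta> \<Phi>)"

definition Cbeta ::
  "(real \<Rightarrow> real \<Rightarrow> real) \<Rightarrow> real \<Rightarrow> real \<Rightarrow> real \<Rightarrow> ((int \<Rightarrow> real) \<Rightarrow> real) set" where
  "Cbeta dI \<theta> p \<beta> = {\<Phi> \<in> Ccont dI \<theta>. (\<exists>M. \<forall>x\<in>Omega. \<bar>\<Phi> x\<bar> \<le> M) \<and>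
                                      bdd_above (holder_quots dI \<theta> p \<beta> \<Phi>)}"

text \<open>Inverse branches of order k: choices c j \<in> {..<b} of an inverse branch for |j| <= k.\<close>
definition branches :: "nat \<Rightarrow> nat \<Rightarrow> (int \<Rightarrow> nat) set" where
  "branches b k = PiE {- int k .. int k} (\<lambda>_. {..<b})"

definition branch_apply ::
  "(nat \<Rightarrow> real \<Rightarrow> real) \<Rightarrow> nat \<Rightarrow> (int \<Rightarrow> nat) \<Rightarrow> (int \<Rightarrow> real) \<Rightarrow> (int \<Rightarrow> real)" where
  "branch_apply \<zeta> k c x = (\<lambda>j. if \<bar>j\<bar> \<le> int k then \<zeta> (c j) (x j) else x j)"

definition Pk ::
  "(nat \<Rightarrow> real \<Rightarrow> real) \<Rightarrow> nat \<Rightarrow> real \<Rightarrow> ((int \<Rightarrow> real) \<Rightarrow> real) \<Rightarrow> nat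
     \<Rightarrow> ((int \<Rightarrow> real) \<Rightarrow> real) \<Rightarrow> (int \<Rightarrow> real) \<Rightarrow> real" where
  "Pk \<zeta> b p f k \<Phi> x =
     (1 / real b ^ (2 * k + 1)) *
     (\<Sum>c\<in>branches b k. exp (f (proj p k (branch_apply \<zeta> k c x))) * \<Phi> (proj p k (branch_apply \<zeta> k c x)))"

definition Pop ::
  "(nat \<Rightarrow> real \<Rightarrow> real) \<Rightarrow> nat \<Rightarrow> real \<Rightarrow> ((int \<Rightarrow> real) \<Rightarrow> real)
     \<Rightarrow> ((int \<Rightarrow> real) \<Rightarrow> real) \<Rightarrow> (int \<Rightarrow> real) \<Rightarrow> real" where
  "Pop \<zeta> b p f \<Phi> x = lim (\<lambda>k. Pk \<zeta> b p f k \<Phi> x)"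

definition Bfun :: "real \<Rightarrow> real \<Rightarrow> real \<Rightarrow> real \<Rightarrow> real" where
  "Bfun fnorm \<eta> \<beta> z = exp (fnorm * (\<eta> powr \<beta> / (1 - \<eta> powr \<beta>)) * z powr \<beta>)"

definition Delta_f ::
  "(real \<Rightarrow> real \<Rightarrow> real) \<Rightarrow> real \<Rightarrow> real \<Rightarrow> real \<Rightarrow> real \<Rightarrow> ((int \<Rightarrow> real) \<Rightarrow> real)
     \<Rightarrow> (int \<Rightarrow> real) measure \<Rightarrow> ((int \<Rightarrow> real) \<Rightarrow> real) set" where
  "Delta_f dI \<theta> p \<beta> \<eta> f \<nu>0 =
     {\<Phi> \<in> Ccont dI \<theta>. (\<forall>x\<in>Omega. 0 \<le> \<Phi> x) \<and> integral\<^sup>L \<nu>0 \<Phi> = 1 \<and>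
        (\<forall>x\<in>Omega. \<forall>y\<in>Omega.
           \<Phi> x \<le> Bfun (holder_semi dI \<theta> p \<beta> f) \<eta> \<beta> (dOm dI \<theta> x y) * \<Phi> y)}"

end

theory Submission
  imports Defs
begin

lemma sum_PiE_insert_indep:
  fixes h :: "('a \<Rightarrow> 'b) \<Rightarrow> real"
  assumes "finite S" "a \<notin> S" "finite (T a)" "\<And>c y. h (c(a:=y)) = h c"
  shows "sum h (PiE (insert a S) T) = real (card (T a)) * sum h (PiE S T)"
proof -
  have "sum h (PiE (insert a S) T) = sum (h \<circ> (\<lambda>(y, g). g(a := y))) (T a \<times> PiE S T)"
    unfolding PiE_insert_eq by (rule sum.reindex[OF inj_combinator[OF assms(2)]])
  also have "\<dots> = (\<Sum>(y,g)\<in>T a \<times> PiE S T. h g)"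
    by (rule sum.cong) (auto simp: assms(4))
  also have "\<dots> = (\<Sum>y\<in>T a. \<Sum>g\<in>PiE S T. h g)"
    by (rule sum.cartesian_product[symmetric])
  finally show ?thesis by simp
qed

lemma card_branches: "card (branches b k) = b ^ (2 * k + 1)"
proof -
  have "card (branches b k) = (\<Prod>i\<in>{- int k..int k}. card {..<b})"
    unfolding branches_def by (rule card_PiE) simp
  also have "\<dots> = b ^ card {- int k..int k}" by simp
  also have "card {- int k..int k} = 2 * k + 1" by simp
  finally show ?thesis .
qed

lemma finite_branches: "finite (branches b k)"
  unfolding branches_def by (auto intro: finite_PiE)

lemma branches_Suc: "branches b (Suc k) = PiE (insert (int k + 1) (insert (- int k - 1) {- int k..int k})) (\<lambda>_. {..<b})"
proof -
  have "{- int (Suc k)..int (Suc k)} = insert (int k + 1) (insert (- int k - 1) {- int k..int k})" by auto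
  then show ?thesis unfolding branches_def by simp
qed

lemma sum_branches_Suc:
  fixes h :: "(int \<Rightarrow> nat) \<Rightarrow> real"
  assumes "\<And>c a y. \<bar>a\<bar> > int k \<Longrightarrow> h (c(a:=y)) = h c"
  shows "sum h (branches b (Suc k)) = real b ^ 2 * sum h (branches b k)"
proof -
  have "sum h (branches b (Suc k)) = real (card {..<b}) * sum h (PiE (insert (- int k - 1) {- int k..int k}) (\<lambda>_. {..<b}))"
    unfolding branches_Suc by (rule sum_PiE_insert_indep) (auto intro: assms)
  also have "sum h (PiE (insert (- int k - 1) {- int k..int k}) (\<lambda>_. {..<b})) = real (card {..<b}) * sum h (branches b k)"
    unfolding branches_def by (rule sum_PiE_insert_indep) (auto intro: assms)
  finally show ?thesis by (simp add: power2_eq_square)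
qed

lemma ba_upd: "\<bar>a\<bar> > int k \<Longrightarrow> branch_apply \<zeta> k (c(a:=y)) x = branch_apply \<zeta> k c x"
  by (auto simp: branch_apply_def fun_eq_iff)

lemma powr_pow: "0 \<le> (t::real) \<Longrightarrow> (t ^ n) powr a = (t powr a) ^ n"
  by (induction n) (auto simp: powr_mult)

lemma exp_minus_one_le: "0 \<le> (t::real) \<Longrightarrow> exp t - 1 \<le> t * exp t"
proof -
  assume t: "0 \<le> t"
  have "1 - t \<le> exp (- t)" using exp_ge_add_one_self[of "-t"] by simp
  then have "(1 - t) * exp t \<le> exp (-t) * exp t" by (intro mult_right_mono) auto
  then show ?thesis by (simp add: exp_minus algebra_simps)
qed

lemma ratio_diff:
  fixes a c K G :: real
  assumes "0 \<le> a" "0 \<le> c" "a \<le> K * c" "c \<le> K * a" "a \<le> G" "c \<le> G" "1 \<le> K"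
  shows "\<bar>a - c\<bar> \<le> (K - 1) * G"
proof -
  have "a - c \<le> (K - 1) * c" using assms by (simp add: algebra_simps)
  also have "\<dots> \<le> (K - 1) * G" using assms by (intro mult_left_mono) auto
  finally have 1: "a - c \<le> (K - 1) * G" .
  have "c - a \<le> (K - 1) * a" using assms by (simp add: algebra_simps)
  also have "\<dots> \<le> (K - 1) * G" using assms by (intro mult_left_mono) auto
  finally have 2: "c - a \<le> (K - 1) * G" .
  from 1 2 show ?thesis by linarith
qed

lemma convergent_diff_summable:
  fixes X :: "nat \<Rightarrow> real"
  assumes "summable (\<lambda>k. X (Suc k) - X k)"
  shows "convergent X"
proof -
  have "(\<lambda>n. \<Sum>i<n. X (Suc i) - X i) \<longlonglongrightarrow> suminf (\<lambda>k. X (Suc k) - X k)"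
    using summable_LIMSEQ[OF assms] .
  then have "(\<lambda>n. X n - X 0) \<longlonglongrightarrow> suminf (\<lambda>k. X (Suc k) - X k)"
    by (simp add: sum_lessThan_telescope)
  then have "(\<lambda>n. X n - X 0 + X 0) \<longlonglongrightarrow> suminf (\<lambda>k. X (Suc k) - X k) + X 0"
    by (intro tendsto_add) auto
  then show ?thesis unfolding convergent_def by auto
qed

locale PF =
  fixes dI :: "real \<Rightarrow> real \<Rightarrow> real" and \<theta> \<eta> \<beta> p MI F :: real
    and \<zeta> :: "nat \<Rightarrow> real \<Rightarrow> real" and b :: nat and f :: "(int \<Rightarrow> real) \<Rightarrow> real"
  assumes metric: "metric_on_I dI"
    and MI: "\<forall>s\<in>Iset. \<forall>t\<in>Iset. dI s t \<le> MI"
    and theta: "0 < \<theta>" "\<theta> < 1"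
    and eta: "0 < \<eta>" "\<eta> < 1"
    and beta: "0 < \<beta>" "\<beta> \<le> 1"
    and pI: "p \<in> Iset"
    and zI: "\<forall>i<b. \<forall>t\<in>Iset. \<zeta> i t \<in> Iset"
    and contr: "\<forall>i<b. \<forall>s\<in>Iset. \<forall>t\<in>Iset. dI (\<zeta> i s) (\<zeta> i t) \<le> \<eta> * dI s t"
    and bpos: "0 < b"
    and fF: "\<forall>x\<in>Omega. \<bar>f x\<bar> \<le> F"
    and fH: "bdd_above (holder_quots dI \<theta> p \<beta> f)"
begin

abbreviation "D \<equiv> dOm dI \<theta>"
abbreviation "H \<equiv> holder_semi dI \<theta> p \<beta> f"
abbreviation "B \<equiv> Bfun H \<eta> \<beta>"

lemma dI_nonneg: "s \<in> Iset \<Longrightarrow> t \<in> Iset \<Longrightarrow> 0 \<le> dI s t"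
  using metric unfolding metric_on_I_def by blast
lemma dI_sym: "s \<in> Iset \<Longrightarrow> t \<in> Iset \<Longrightarrow> dI s t = dI t s"
  using metric unfolding metric_on_I_def by blast
lemma dI_zero: "s \<in> Iset \<Longrightarrow> t \<in> Iset \<Longrightarrow> dI s t = 0 \<longleftrightarrow> s = t"
  using metric unfolding metric_on_I_def by blast
lemma dI_tri: "s \<in> Iset \<Longrightarrow> t \<in> Iset \<Longrightarrow> u \<in> Iset \<Longrightarrow> dI s u \<le> dI s t + dI t u"
  using metric unfolding metric_on_I_def by blast

lemma dI_self[simp]: "s \<in> Iset \<Longrightarrow> dI s s = 0"
  using dI_zero by blast

lemma MI_nonneg: "0 \<le> MI"
  using MI pI dI_zero by force

lemma OmegaI: "x \<in> Omega \<Longrightarrow> x i \<in> Iset"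
  by (simp add: Omega_def)

lemma term_bound: assumes "x \<in> Omega" "y \<in> Omega"
  shows "\<theta> ^ nat \<bar>k\<bar> * dI (x k) (y k) \<le> MI"
proof -
  have "\<theta> ^ nat \<bar>k\<bar> \<le> 1" using theta by (simp add: power_le_one)
  moreover have "0 \<le> dI (x k) (y k)" "dI (x k) (y k) \<le> MI"
    using assms OmegaI dI_nonneg MI by auto
  ultimately show ?thesis using theta
    by (metis mult_left_le_one_le mult_mono' zero_le_power less_imp_le order_trans)
qed

lemma bdd: assumes "x \<in> Omega" "y \<in> Omega"
  shows "bdd_above (range (\<lambda>k. \<theta> ^ nat \<bar>k\<bar> * dI (x k) (y k)))"
  using term_bound[OF assms] by (auto intro!: bdd_aboveI)

lemma term_le_D: assumes "x \<in> Omega" "y \<in> Omega"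
  shows "\<theta> ^ nat \<bar>k\<bar> * dI (x k) (y k) \<le> D x y"
  unfolding dOm_def using assms by (simp add: cSUP_upper[OF _ bdd[OF assms]])

lemma D_le: assumes "x \<in> Omega" "y \<in> Omega" "\<And>k. \<theta> ^ nat \<bar>k\<bar> * dI (x k) (y k) \<le> c"
  shows "D x y \<le> c"
  unfolding dOm_def using assms by (simp add: cSUP_least)

lemma D_nonneg: "0 \<le> D x y"
proof (cases "x \<in> Omega \<and> y \<in> Omega")
  case True
  then have "0 \<le> \<theta> ^ nat \<bar>0::int\<bar> * dI (x 0) (y 0)" using dI_nonneg OmegaI by simp
  then show ?thesis using term_le_D[of x y 0] True by linarith
qed (auto simp add: dOm_def)

lemma D_bound: "D x y \<le> MI"
proof (cases "x \<in> Omega \<and> y \<in> Omega")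
  case True
  then show ?thesis using D_le term_bound by blast
qed (auto simp add: dOm_def MI_nonneg)

lemma metric_space: "Metric_space Omega D"
proof
  fix x y show "0 \<le> D x y" by (rule D_nonneg)
  show "D x y = D y x"
  proof (cases "x \<in> Omega \<and> y \<in> Omega")
    case True then show ?thesis unfolding dOm_def using dI_sym OmegaI by auto
  qed (auto simp: dOm_def)
next
  fix x y assume xy: "x \<in> Omega" "y \<in> Omega"
  show "D x y = 0 \<longleftrightarrow> x = y"
  proof
    assume h: "D x y = 0"
    show "x = y"
    proof
      fix k
      have "\<theta> ^ nat \<bar>k\<bar> * dI (x k) (y k) \<le> 0" using term_le_D[OF xy, of k] h by simp
      moreover have "0 \<le> dI (x k) (y k)" using xy OmegaI dI_nonneg by auto
      ultimately have "dI (x k) (y k) = 0" using theta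
        by (metis mult_le_0_iff order_antisym_conv zero_less_power linorder_not_le)
      then show "x k = y k" using xy OmegaI dI_zero by auto
    qed
  next
    assume "x = y"
    then show "D x y = 0"
    proof -
      have "D x y \<le> 0" using \<open>x = y\<close> xy OmegaI by (intro D_le[OF xy]) auto
      then show ?thesis using D_nonneg[of x y] by linarith
    qed
  qed
next
  fix x y z assume xyz: "x \<in> Omega" "y \<in> Omega" "z \<in> Omega"
  show "D x z \<le> D x y + D y z"
  proof (rule D_le[OF xyz(1,3)])
    fix k
    have "\<theta> ^ nat \<bar>k\<bar> * dI (x k) (z k) \<le> \<theta> ^ nat \<bar>k\<bar> * (dI (x k) (y k) + dI (y k) (z k))"
      using dI_tri OmegaI xyz theta by (intro mult_left_mono) auto
    also have "\<dots> \<le> D x y + D y z"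
      using term_le_D[OF xyz(1,2), of k] term_le_D[OF xyz(2,3), of k] by (simp add: distrib_left)
    finally show "\<theta> ^ nat \<bar>k\<bar> * dI (x k) (z k) \<le> D x y + D y z" .
  qed
qed

lemma proj_Omega: "x \<in> Omega \<Longrightarrow> proj p k x \<in> Omega"
  using pI by (auto simp: Omega_def proj_def)

lemma branch_mem: "c \<in> branches b k \<Longrightarrow> \<bar>j\<bar> \<le> int k \<Longrightarrow> c j < b"
  unfolding branches_def by (auto dest!: PiE_mem[where x=j])

lemma ba_Omega: "x \<in> Omega \<Longrightarrow> c \<in> branches b k \<Longrightarrow> branch_apply \<zeta> k c x \<in> Omega"
  using zI branch_mem by (auto simp: Omega_def branch_apply_def)

lemma proj_proj[simp]: "proj p k (proj p k x) = proj p k x"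
  by (auto simp: proj_def)

lemma holder: assumes "x \<in> Omega" "y \<in> Omega"
  shows "\<bar>f (proj p k x) - f (proj p k y)\<bar> \<le> H * D x y powr \<beta>"
proof (cases "x = y")
  case True
  interpret M: Metric_space Omega D by (rule metric_space)
  have "D x y = 0" using True assms by simp
  then show ?thesis using True by simp
next
  case False
  interpret M: Metric_space Omega D by (rule metric_space)
  have Dpos: "0 < D x y" using False assms M.nonneg[of x y] M.zero[of x y] by linarith
  have q: "\<bar>f (proj p k x) - f (proj p k y)\<bar> / D x y powr \<beta> \<in> holder_quots dI \<theta> p \<beta> f"
    unfolding holder_quots_def using assms False by blast
  have "\<bar>f (proj p k x) - f (proj p k y)\<bar> / D x y powr \<beta> \<le> H"
    unfolding holder_semi_def by (rule cSup_upper[OF q fH])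
  then show ?thesis using Dpos by (simp add: divide_le_eq)
qed

lemma H_nonneg: "0 \<le> H"
proof -
  let ?x = "\<lambda>_::int. 0::real" and ?y = "\<lambda>_::int. 1/2::real"
  have xy: "?x \<in> Omega" "?y \<in> Omega" "?x \<noteq> ?y" by (auto simp: Omega_def Iset_def fun_eq_iff)
  have q: "\<bar>f (proj p 0 ?x) - f (proj p 0 ?y)\<bar> / D ?x ?y powr \<beta> \<in> holder_quots dI \<theta> p \<beta> f"
    unfolding holder_quots_def using xy by blast
  have "\<bar>f (proj p 0 ?x) - f (proj p 0 ?y)\<bar> / D ?x ?y powr \<beta> \<le> H"
    unfolding holder_semi_def by (rule cSup_upper[OF q fH])
  moreover have "0 \<le> \<bar>f (proj p 0 ?x) - f (proj p 0 ?y)\<bar> / D ?x ?y powr \<beta>" by simp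
  ultimately show ?thesis by linarith
qed

definition cB where "cB = H * (\<eta> powr \<beta> / (1 - \<eta> powr \<beta>))"

lemma eta_b: "0 < \<eta> powr \<beta>" "\<eta> powr \<beta> < 1"
  using eta beta powr_less_mono2[of \<beta> \<eta> 1] by auto

lemma cB_nonneg: "0 \<le> cB"
  unfolding cB_def using H_nonneg eta_b by simp

lemma B_eq: "B z = exp (cB * z powr \<beta>)"
  by (simp add: Bfun_def cB_def)

lemma B_ge1: "1 \<le> B z"
  unfolding B_eq using cB_nonneg by simp

lemma B_mono: "0 \<le> z \<Longrightarrow> z \<le> w \<Longrightarrow> B z \<le> B w"
  unfolding B_eq using cB_nonneg beta by (auto intro!: mult_left_mono powr_mono2)

lemma contraction: assumes "x \<in> Omega" "y \<in> Omega" "c \<in> branches b k"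
  shows "D (proj p k (branch_apply \<zeta> k c x)) (proj p k (branch_apply \<zeta> k c y)) \<le> \<eta> * D x y"
proof (rule D_le)
  show "proj p k (branch_apply \<zeta> k c x) \<in> Omega" "proj p k (branch_apply \<zeta> k c y) \<in> Omega"
    using assms by (auto intro: proj_Omega ba_Omega)
  fix j
  show "\<theta> ^ nat \<bar>j\<bar> * dI (proj p k (branch_apply \<zeta> k c x) j) (proj p k (branch_apply \<zeta> k c y) j) \<le> \<eta> * D x y"
  proof (cases "\<bar>j\<bar> \<le> int k")
    case True
    then have cj: "c j < b" using branch_mem assms by auto
    have "\<theta> ^ nat \<bar>j\<bar> * dI (proj p k (branch_apply \<zeta> k c x) j) (proj p k (branch_apply \<zeta> k c y) j)
        = \<theta> ^ nat \<bar>j\<bar> * dI (\<zeta> (c j) (x j)) (\<zeta> (c j) (y j))"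
      using True by (simp add: proj_def branch_apply_def)
    also have "\<dots> \<le> \<theta> ^ nat \<bar>j\<bar> * (\<eta> * dI (x j) (y j))"
      using contr cj assms OmegaI theta by (intro mult_left_mono) auto
    also have "\<dots> = \<eta> * (\<theta> ^ nat \<bar>j\<bar> * dI (x j) (y j))" by simp
    also have "\<dots> \<le> \<eta> * D x y" using term_le_D[OF assms(1,2)] eta by (intro mult_left_mono) auto
    finally show ?thesis .
  next
    case False
    then show ?thesis using pI eta D_nonneg[of x y] by (simp add: proj_def)
  qed
qed

definition ratio :: "((int \<Rightarrow> real) \<Rightarrow> real) \<Rightarrow> bool" where
  "ratio \<Phi> \<longleftrightarrow> (\<forall>u\<in>Omega. 0 \<le> \<Phi> u) \<and> (\<forall>u\<in>Omega. \<forall>v\<in>Omega. \<Phi> u \<le> B (D u v) * \<Phi> v)"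

lemma cB_id: "(cB + H) * \<eta> powr \<beta> = cB"
proof -
  have ne: "1 - \<eta> powr \<beta> \<noteq> 0" using eta_b by simp
  show ?thesis unfolding cB_def using ne by (simp add: field_simps)
qed

lemma term_ineq: assumes xy: "x \<in> Omega" "y \<in> Omega" and c: "c \<in> branches b k" and r: "ratio \<Phi>"
  shows "exp (f (proj p k (branch_apply \<zeta> k c x))) * \<Phi> (proj p k (branch_apply \<zeta> k c x))
       \<le> B (D x y) * (exp (f (proj p k (branch_apply \<zeta> k c y))) * \<Phi> (proj p k (branch_apply \<zeta> k c y)))"
proof -
  define u where "u = proj p k (branch_apply \<zeta> k c x)"
  define v where "v = proj p k (branch_apply \<zeta> k c y)"
  define d where "d = D x y"
  have uv: "u \<in> Omega" "v \<in> Omega" unfolding u_def v_def using xy c by (auto intro: proj_Omega ba_Omega)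
  have d0: "0 \<le> d" unfolding d_def by (rule D_nonneg)
  have dd: "D u v \<le> \<eta> * d" unfolding u_def v_def d_def by (rule contraction[OF xy c])
  have pv: "0 \<le> \<Phi> v" "0 \<le> \<Phi> u" using r uv unfolding ratio_def by auto
  have "\<Phi> u \<le> B (D u v) * \<Phi> v" using r uv unfolding ratio_def by auto
  also have "\<dots> \<le> B (\<eta> * d) * \<Phi> v" using B_mono[OF D_nonneg dd] pv(1) by (rule mult_right_mono)
  finally have ph: "\<Phi> u \<le> B (\<eta> * d) * \<Phi> v" .
  have "f u - f v = f (proj p k (branch_apply \<zeta> k c x)) - f (proj p k (branch_apply \<zeta> k c y))"
    unfolding u_def v_def by simp
  also have "\<dots> = f (proj p k u) - f (proj p k v)" unfolding u_def v_def by simp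
  also have "\<dots> \<le> H * D u v powr \<beta>" using holder[OF uv, of k] by simp
  also have "\<dots> \<le> H * (\<eta> * d) powr \<beta>"
    using H_nonneg D_nonneg dd beta by (intro mult_left_mono powr_mono2) auto
  finally have fh: "f u \<le> f v + H * (\<eta> * d) powr \<beta>" by simp
  have "exp (f u) * \<Phi> u \<le> exp (f v + H * (\<eta> * d) powr \<beta>) * (B (\<eta> * d) * \<Phi> v)"
    using fh ph pv by (intro mult_mono) (auto simp: B_eq)
  also have "\<dots> = exp (H * (\<eta> * d) powr \<beta> + cB * (\<eta> * d) powr \<beta>) * (exp (f v) * \<Phi> v)"
    by (simp add: B_eq exp_add)
  also have "H * (\<eta> * d) powr \<beta> + cB * (\<eta> * d) powr \<beta> = (cB + H) * \<eta> powr \<beta> * d powr \<beta>"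
    using eta d0 by (simp add: powr_mult algebra_simps)
  also have "\<dots> = cB * d powr \<beta>" by (simp add: cB_id)
  finally show ?thesis unfolding u_def v_def d_def by (simp add: B_eq)
qed

lemma Pk_ineq: assumes xy: "x \<in> Omega" "y \<in> Omega" and r: "ratio \<Phi>"
  shows "Pk \<zeta> b p f k \<Phi> x \<le> B (D x y) * Pk \<zeta> b p f k \<Phi> y"
proof -
  have "(\<Sum>c\<in>branches b k. exp (f (proj p k (branch_apply \<zeta> k c x))) * \<Phi> (proj p k (branch_apply \<zeta> k c x)))
     \<le> (\<Sum>c\<in>branches b k. B (D x y) * (exp (f (proj p k (branch_apply \<zeta> k c y))) * \<Phi> (proj p k (branch_apply \<zeta> k c y))))"
    by (rule sum_mono) (rule term_ineq[OF xy _ r])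
  also have "\<dots> = B (D x y) * (\<Sum>c\<in>branches b k. exp (f (proj p k (branch_apply \<zeta> k c y))) * \<Phi> (proj p k (branch_apply \<zeta> k c y)))"
    by (simp add: sum_distrib_left)
  finally have S: "(\<Sum>c\<in>branches b k. exp (f (proj p k (branch_apply \<zeta> k c x))) * \<Phi> (proj p k (branch_apply \<zeta> k c x)))
     \<le> B (D x y) * (\<Sum>c\<in>branches b k. exp (f (proj p k (branch_apply \<zeta> k c y))) * \<Phi> (proj p k (branch_apply \<zeta> k c y)))" .
  have "0 \<le> 1 / real b ^ (2 * k + 1)" by simp
  from mult_left_mono[OF S this] show ?thesis unfolding Pk_def by (simp only: mult.assoc mult.left_commute)
qed

definition gg :: "((int \<Rightarrow> real) \<Rightarrow> real) \<Rightarrow> (int \<Rightarrow> real) \<Rightarrow> real" where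
  "gg \<Phi> u = exp (f u) * \<Phi> u"

definition U :: "nat \<Rightarrow> (int \<Rightarrow> nat) \<Rightarrow> (int \<Rightarrow> real) \<Rightarrow> (int \<Rightarrow> real)" where
  "U k c x = proj p k (branch_apply \<zeta> k c x)"

lemma Pk_U: "Pk \<zeta> b p f k \<Phi> x = (1 / real b ^ (2 * k + 1)) * (\<Sum>c\<in>branches b k. gg \<Phi> (U k c x))"
  by (simp add: Pk_def gg_def U_def)

lemma proj_mono: "k \<le> m \<Longrightarrow> proj p m (proj p k y) = proj p k y"
  by (auto simp: proj_def fun_eq_iff)

lemma U_Omega: "x \<in> Omega \<Longrightarrow> c \<in> branches b k \<Longrightarrow> U k c x \<in> Omega"
  unfolding U_def by (intro proj_Omega ba_Omega)

lemma U_Omega': "x \<in> Omega \<Longrightarrow> c \<in> branches b (Suc k) \<Longrightarrow> U k c x \<in> Omega"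
  unfolding U_def using pI zI branch_mem
  by (auto simp: Omega_def proj_def branch_apply_def)

lemma Pk_alt: "Pk \<zeta> b p f k \<Phi> x = (1 / real b ^ (2 * Suc k + 1)) * (\<Sum>c\<in>branches b (Suc k). gg \<Phi> (U k c x))"
proof -
  have "(\<Sum>c\<in>branches b (Suc k). gg \<Phi> (U k c x)) = real b ^ 2 * (\<Sum>c\<in>branches b k. gg \<Phi> (U k c x))"
    by (rule sum_branches_Suc) (simp add: U_def ba_upd)
  moreover have "real b ^ (2 * Suc k + 1) = real b ^ 2 * real b ^ (2 * k + 1)"
    by (simp add: power_add[symmetric])
  ultimately show ?thesis using bpos by (simp add: Pk_U power2_eq_square field_simps)
qed

lemma dist_step: assumes x: "x \<in> Omega" and c: "c \<in> branches b (Suc k)"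
  shows "D (U (Suc k) c x) (U k c x) \<le> MI * \<theta> ^ Suc k"
proof (rule D_le)
  show "U (Suc k) c x \<in> Omega" "U k c x \<in> Omega" using x c by (auto intro: U_Omega U_Omega')
  fix j
  show "\<theta> ^ nat \<bar>j\<bar> * dI (U (Suc k) c x j) (U k c x j) \<le> MI * \<theta> ^ Suc k"
  proof (cases "\<bar>j\<bar> \<le> int k")
    case True
    then have "U (Suc k) c x j = U k c x j" by (simp add: U_def proj_def branch_apply_def)
    moreover have "U k c x j \<in> Iset" using U_Omega'[OF x c] OmegaI by blast
    ultimately show ?thesis using MI_nonneg theta by simp
  next
    case False
    have "\<theta> ^ nat \<bar>j\<bar> \<le> \<theta> ^ Suc k" using False theta by (intro power_decreasing) auto
    moreover have "dI (U (Suc k) c x j) (U k c x j) \<le> MI" "0 \<le> dI (U (Suc k) c x j) (U k c x j)"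
      using MI U_Omega[OF x c] U_Omega'[OF x c] OmegaI dI_nonneg by auto
    ultimately have "\<theta> ^ nat \<bar>j\<bar> * dI (U (Suc k) c x j) (U k c x j) \<le> \<theta> ^ Suc k * MI"
      using theta by (intro mult_mono) auto
    then show ?thesis by (simp add: mult.commute)
  qed
qed

lemma gg_pair: assumes uv: "u \<in> Omega" "v \<in> Omega" "proj p m u = u" "proj p m v = v" and r: "ratio \<Phi>"
  shows "gg \<Phi> u \<le> exp ((cB + H) * D u v powr \<beta>) * gg \<Phi> v"
proof -
  have pv: "0 \<le> \<Phi> v" "0 \<le> \<Phi> u" using r uv unfolding ratio_def by auto
  have ph: "\<Phi> u \<le> exp (cB * D u v powr \<beta>) * \<Phi> v" using r uv unfolding ratio_def B_eq by auto
  have "f u - f v = f (proj p m u) - f (proj p m v)" using uv by simp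
  also have "\<dots> \<le> H * D u v powr \<beta>" using holder[OF uv(1,2), of m] by simp
  finally have fh: "f u \<le> f v + H * D u v powr \<beta>" by simp
  have "exp (f u) * \<Phi> u \<le> exp (f v + H * D u v powr \<beta>) * (exp (cB * D u v powr \<beta>) * \<Phi> v)"
    using fh ph pv by (intro mult_mono) auto
  also have "\<dots> = exp ((cB + H) * D u v powr \<beta>) * (exp (f v) * \<Phi> v)"
    by (simp add: exp_add algebra_simps)
  finally show ?thesis unfolding gg_def .
qed

lemma gg_bound: assumes "u \<in> Omega" "ratio \<Phi>" "\<forall>u\<in>Omega. \<Phi> u \<le> C"
  shows "0 \<le> gg \<Phi> u" "gg \<Phi> u \<le> exp F * C"
proof -
  have "0 \<le> \<Phi> u" "\<Phi> u \<le> C" using assms unfolding ratio_def by auto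
  moreover have "exp (f u) \<le> exp F" using fF assms(1) by auto
  ultimately show "0 \<le> gg \<Phi> u" "gg \<Phi> u \<le> exp F * C" unfolding gg_def
    by (auto intro: mult_mono)
qed

definition Ek where "Ek C = exp F * C * (cB + H) * MI powr \<beta> * exp ((cB + H) * MI powr \<beta>)"

lemma gg_step: assumes x: "x \<in> Omega" and c: "c \<in> branches b (Suc k)" and r: "ratio \<Phi>"
    and C: "\<forall>u\<in>Omega. \<Phi> u \<le> C"
  shows "\<bar>gg \<Phi> (U (Suc k) c x) - gg \<Phi> (U k c x)\<bar> \<le> Ek C * (\<theta> powr \<beta>) ^ Suc k"
proof -
  interpret M: Metric_space Omega D by (rule metric_space)
  define u where "u = U (Suc k) c x"
  define v where "v = U k c x"
  have uv: "u \<in> Omega" "v \<in> Omega" unfolding u_def v_def using x c by (auto intro: U_Omega U_Omega')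
  have pu: "proj p (Suc k) u = u" "proj p (Suc k) v = v" unfolding u_def v_def U_def
    by (auto intro: proj_mono)
  define t where "t = (cB + H) * D u v powr \<beta>"
  have cH: "0 \<le> cB + H" using cB_nonneg H_nonneg by simp
  have t0: "0 \<le> t" unfolding t_def using cH by simp
  have 1: "gg \<Phi> u \<le> exp t * gg \<Phi> v" unfolding t_def by (rule gg_pair[OF uv pu r])
  have 2: "gg \<Phi> v \<le> exp t * gg \<Phi> u" unfolding t_def M.commute[of u v]
    by (rule gg_pair[OF uv(2,1) pu(2,1) r])
  have "\<bar>gg \<Phi> u - gg \<Phi> v\<bar> \<le> (exp t - 1) * (exp F * C)"
    by (rule ratio_diff[OF gg_bound(1)[OF uv(1) r C] gg_bound(1)[OF uv(2) r C] 1 2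
          gg_bound(2)[OF uv(1) r C] gg_bound(2)[OF uv(2) r C]]) (use t0 in simp)
  also have "\<dots> \<le> (t * exp t) * (exp F * C)"
    using exp_minus_one_le[OF t0] gg_bound(1,2)[OF uv(1) r C] by (intro mult_right_mono) auto
  also have "\<dots> \<le> ((cB + H) * (MI powr \<beta> * (\<theta> powr \<beta>) ^ Suc k) * exp ((cB + H) * MI powr \<beta>)) * (exp F * C)"
  proof -
    have dd: "D u v \<le> MI * \<theta> ^ Suc k" unfolding u_def v_def by (rule dist_step[OF x c])
    have "D u v powr \<beta> \<le> (MI * \<theta> ^ Suc k) powr \<beta>"
      using dd beta by (intro powr_mono2) auto
    also have "\<dots> = MI powr \<beta> * (\<theta> powr \<beta>) ^ Suc k"
      using MI_nonneg theta by (simp add: powr_mult powr_pow)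
    finally have a: "t \<le> (cB + H) * (MI powr \<beta> * (\<theta> powr \<beta>) ^ Suc k)"
      unfolding t_def using cH by (intro mult_left_mono) auto
    have "D u v powr \<beta> \<le> MI powr \<beta>" using D_bound beta by (intro powr_mono2) auto
    then have "t \<le> (cB + H) * MI powr \<beta>" unfolding t_def using cH by (intro mult_left_mono) auto
    then have b: "exp t \<le> exp ((cB + H) * MI powr \<beta>)" by simp
    have "t * exp t \<le> (cB + H) * (MI powr \<beta> * (\<theta> powr \<beta>) ^ Suc k) * exp ((cB + H) * MI powr \<beta>)"
      using a b t0 by (intro mult_mono) auto
    then show ?thesis using gg_bound(1,2)[OF uv(1) r C] by (intro mult_right_mono) auto
  qed
  also have "\<dots> = Ek C * (\<theta> powr \<beta>) ^ Suc k" unfolding Ek_def by (simp add: algebra_simps)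
  finally show ?thesis unfolding u_def v_def .
qed

lemma Pk_diff: assumes x: "x \<in> Omega" and r: "ratio \<Phi>" and C: "\<forall>u\<in>Omega. \<Phi> u \<le> C"
  shows "\<bar>Pk \<zeta> b p f (Suc k) \<Phi> x - Pk \<zeta> b p f k \<Phi> x\<bar> \<le> Ek C * (\<theta> powr \<beta>) ^ Suc k"
proof -
  define N where "N = real b ^ (2 * Suc k + 1)"
  define S where "S = (\<Sum>c\<in>branches b (Suc k). gg \<Phi> (U (Suc k) c x) - gg \<Phi> (U k c x))"
  define E where "E = Ek C * (\<theta> powr \<beta>) ^ Suc k"
  have N: "0 < N" "real (card (branches b (Suc k))) = N" unfolding N_def card_branches using bpos by auto
  have e1: "Pk \<zeta> b p f (Suc k) \<Phi> x = (1 / N) * (\<Sum>c\<in>branches b (Suc k). gg \<Phi> (U (Suc k) c x))"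
    unfolding N_def by (rule Pk_U)
  have e2: "Pk \<zeta> b p f k \<Phi> x = (1 / N) * (\<Sum>c\<in>branches b (Suc k). gg \<Phi> (U k c x))"
    unfolding N_def by (rule Pk_alt)
  have eq: "Pk \<zeta> b p f (Suc k) \<Phi> x - Pk \<zeta> b p f k \<Phi> x = (1 / N) * S"
    unfolding e1 e2 S_def sum_subtractf right_diff_distrib by (rule refl)
  have "\<bar>S\<bar> \<le> (\<Sum>c\<in>branches b (Suc k). \<bar>gg \<Phi> (U (Suc k) c x) - gg \<Phi> (U k c x)\<bar>)"
    unfolding S_def by (rule sum_abs)
  also have "\<dots> \<le> (\<Sum>c\<in>branches b (Suc k). E)"
    unfolding E_def by (rule sum_mono) (rule gg_step[OF x _ r C])
  also have "\<dots> = N * E" unfolding sum_constant N(2) ..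
  finally have Sb: "\<bar>S\<bar> \<le> N * E" .
  have "\<bar>(1 / N) * S\<bar> = \<bar>S\<bar> / N" using N(1) by (simp add: abs_mult)
  also have "\<dots> \<le> (N * E) / N" using Sb N(1) by (rule divide_right_mono[OF _ less_imp_le])
  also have "\<dots> = E" using N(1) by simp
  finally show ?thesis unfolding eq E_def .
qed

lemma Pk_convergent: assumes x: "x \<in> Omega" and r: "ratio \<Phi>" and C: "\<forall>u\<in>Omega. \<Phi> u \<le> C"
  shows "convergent (\<lambda>k. Pk \<zeta> b p f k \<Phi> x)"
proof (rule convergent_diff_summable, rule summable_comparison_test)
  have tb: "0 < \<theta> powr \<beta>" "\<theta> powr \<beta> < 1"
    using theta beta powr_less_mono2[of \<beta> \<theta> 1] by auto
  show "summable (\<lambda>k. Ek C * (\<theta> powr \<beta>) ^ Suc k)"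
  proof -
    have "summable (\<lambda>k. (\<theta> powr \<beta>) ^ k)" using tb by (intro summable_geometric) simp
    then have "summable (\<lambda>k. (Ek C * \<theta> powr \<beta>) * (\<theta> powr \<beta>) ^ k)" by (rule summable_mult)
    then show ?thesis by (simp add: mult.assoc)
  qed
  show "\<exists>N. \<forall>n\<ge>N. norm (Pk \<zeta> b p f (Suc n) \<Phi> x - Pk \<zeta> b p f n \<Phi> x) \<le> Ek C * (\<theta> powr \<beta>) ^ Suc n"
    using Pk_diff[OF x r C] by auto
qed

lemma Pk_bounds: assumes x: "x \<in> Omega" and r: "ratio \<Phi>" and C: "\<forall>u\<in>Omega. \<Phi> u \<le> C"
  shows "0 \<le> Pk \<zeta> b p f k \<Phi> x" "Pk \<zeta> b p f k \<Phi> x \<le> exp F * C"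
proof -
  define N where "N = real b ^ (2 * k + 1)"
  have N: "0 < N" "card (branches b k) = N" unfolding N_def using bpos by (auto simp: card_branches)
  have "0 \<le> (\<Sum>c\<in>branches b k. gg \<Phi> (U k c x))"
    using gg_bound(1)[OF U_Omega[OF x] r C] by (auto intro!: sum_nonneg)
  then show "0 \<le> Pk \<zeta> b p f k \<Phi> x" unfolding Pk_U by simp
  have "(\<Sum>c\<in>branches b k. gg \<Phi> (U k c x)) \<le> (\<Sum>c\<in>branches b k. exp F * C)"
    using gg_bound(2)[OF U_Omega[OF x] r C] by (intro sum_mono) auto
  then have "(\<Sum>c\<in>branches b k. gg \<Phi> (U k c x)) \<le> N * (exp F * C)" using N by simp
  then show "Pk \<zeta> b p f k \<Phi> x \<le> exp F * C" unfolding Pk_U N_def[symmetric] using N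
    by (simp add: field_simps)
qed

lemma Pk_one_lower: assumes x: "x \<in> Omega"
  shows "exp (- F) \<le> Pk \<zeta> b p f k (\<lambda>_. 1) x"
proof -
  define N where "N = real b ^ (2 * k + 1)"
  have N: "0 < N" "card (branches b k) = N" unfolding N_def using bpos by (auto simp: card_branches)
  have "(\<Sum>c\<in>branches b k. exp (- F)) \<le> (\<Sum>c\<in>branches b k. gg (\<lambda>_. 1) (U k c x))"
  proof (rule sum_mono)
    fix c assume "c \<in> branches b k"
    then have "\<bar>f (U k c x)\<bar> \<le> F" using fF U_Omega[OF x] by blast
    then have "- F \<le> f (U k c x)" by linarith
    then show "exp (- F) \<le> gg (\<lambda>_. 1) (U k c x)" unfolding gg_def by simp
  qed
  then have "N * exp (- F) \<le> (\<Sum>c\<in>branches b k. gg (\<lambda>_. 1) (U k c x))" using N by simp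
  then show ?thesis unfolding Pk_U N_def[symmetric] using N by (simp add: field_simps)
qed

lemma ratio_one: "ratio (\<lambda>_. 1)"
  unfolding ratio_def using B_ge1 by simp

lemma Pop_lim: assumes "x \<in> Omega" "ratio \<Phi>" "\<forall>u\<in>Omega. \<Phi> u \<le> C"
  shows "(\<lambda>k. Pk \<zeta> b p f k \<Phi> x) \<longlonglongrightarrow> Pop \<zeta> b p f \<Phi> x"
  unfolding Pop_def using Pk_convergent[OF assms] by (simp add: convergent_LIMSEQ_iff)

lemma Pop_bounds: assumes "x \<in> Omega" "ratio \<Phi>" "\<forall>u\<in>Omega. \<Phi> u \<le> C"
  shows "0 \<le> Pop \<zeta> b p f \<Phi> x" "Pop \<zeta> b p f \<Phi> x \<le> exp F * C"
  using LIMSEQ_le_const[OF Pop_lim[OF assms]] LIMSEQ_le_const2[OF Pop_lim[OF assms]] Pk_bounds[OF assms]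
  by auto

lemma Pop_one_lower: assumes "x \<in> Omega"
  shows "exp (- F) \<le> Pop \<zeta> b p f (\<lambda>_. 1) x"
  using LIMSEQ_le_const[OF Pop_lim[OF assms ratio_one, of 1]] Pk_one_lower[OF assms] by auto

lemma Pop_ineq: assumes xy: "x \<in> Omega" "y \<in> Omega" and r: "ratio \<Phi>" and C: "\<forall>u\<in>Omega. \<Phi> u \<le> C"
  shows "Pop \<zeta> b p f \<Phi> x \<le> B (D x y) * Pop \<zeta> b p f \<Phi> y"
proof (rule LIMSEQ_le[OF Pop_lim[OF xy(1) r C]])
  show "(\<lambda>k. B (D x y) * Pk \<zeta> b p f k \<Phi> y) \<longlonglongrightarrow> B (D x y) * Pop \<zeta> b p f \<Phi> y"
    by (intro tendsto_mult_left Pop_lim[OF xy(2) r C])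
  show "\<exists>N. \<forall>n\<ge>N. Pk \<zeta> b p f n \<Phi> x \<le> B (D x y) * Pk \<zeta> b p f n \<Phi> y"
    using Pk_ineq[OF xy r] by auto
qed

lemma B_minus_one: "0 \<le> d \<Longrightarrow> d \<le> MI \<Longrightarrow> B d - 1 \<le> cB * exp (cB * MI powr \<beta>) * d powr \<beta>"
proof -
  assume d: "0 \<le> d" "d \<le> MI"
  have t0: "0 \<le> cB * d powr \<beta>" using cB_nonneg by simp
  have "B d - 1 \<le> cB * d powr \<beta> * exp (cB * d powr \<beta>)" unfolding B_eq by (rule exp_minus_one_le[OF t0])
  also have "\<dots> \<le> cB * d powr \<beta> * exp (cB * MI powr \<beta>)"
    using d cB_nonneg beta t0 by (intro mult_left_mono) (auto intro!: mult_left_mono powr_mono2)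
  finally show ?thesis by (simp add: algebra_simps)
qed

end
theorem mainTheorem4:
  fixes dI :: "real \<Rightarrow> real \<Rightarrow> real"
    and \<theta> \<eta> \<beta> p :: real
    and \<tau> :: "real \<Rightarrow> real"
    and \<zeta> :: "nat \<Rightarrow> real \<Rightarrow> real"
    and b :: nat
    and f :: "(int \<Rightarrow> real) \<Rightarrow> real"
    and \<nu>0 :: "(int \<Rightarrow> real) measure"
    and \<Phi> :: "(int \<Rightarrow> real) \<Rightarrow> real"
  assumes dI_metric: "metric_on_I dI"
    and dI_bounded: "\<exists>M. \<forall>s\<in>Iset. \<forall>t\<in>Iset. dI s t \<le> M"
    and theta: "0 < \<theta>" "\<theta> < 1"
    and tau_maps: "\<forall>t\<in>Iset. \<tau> t \<in> Iset"
    and branches_in: "\<forall>i<b. \<forall>t\<in>Iset. \<zeta> i t \<in> Iset \<and> \<tau> (\<zeta> i t) = t"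
    and full_branches: "\<forall>t\<in>Iset. {s \<in> Iset. \<tau> s = t} = (\<lambda>i. \<zeta> i t) ` {..<b}
                                   \<and> inj_on (\<lambda>i. \<zeta> i t) {..<b}"
    and fixed_pt: "p \<in> Iset" "\<tau> p = p"
    and eta: "0 < \<eta>" "\<eta> < 1"
    and contraction: "\<forall>i<b. \<forall>s\<in>Iset. \<forall>t\<in>Iset. dI (\<zeta> i s) (\<zeta> i t) \<le> \<eta> * dI s t"
    and beta: "0 < \<beta>" "\<beta> \<le> 1"
    and f_in: "f \<in> Cbeta dI \<theta> p \<beta>"
    and nu_prob: "prob_space \<nu>0"
    and nu_space: "space \<nu>0 = Omega"
    and nu_borel: "sets \<nu>0 = sigma_sets Omega {U. openin (Otop dI \<theta>) U}"
    and nu_eigen: "\<forall>\<Psi>\<in>Ccont dI \<theta>. (\<exists>M. \<forall>x\<in>Omega. \<bar>\<Psi> x\<bar> \<le> M) \<longrightarrow>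
                     integrable \<nu>0 (Pop \<zeta> b p f \<Psi>) \<and>
                     integral\<^sup>L \<nu>0 (Pop \<zeta> b p f \<Psi>)
                       = integral\<^sup>L \<nu>0 (Pop \<zeta> b p f (\<lambda>_. 1)) * integral\<^sup>L \<nu>0 \<Psi>"
    and Phi_in: "\<Phi> \<in> Delta_f dI \<theta> p \<beta> \<eta> f \<nu>0"
  shows "(\<lambda>x. Pop \<zeta> b p f \<Phi> x / integral\<^sup>L \<nu>0 (Pop \<zeta> b p f (\<lambda>_. 1)))
           \<in> Delta_f dI \<theta> p \<beta> \<eta> f \<nu>0"
  proof -
  obtain MI where MI: "\<forall>s\<in>Iset. \<forall>t\<in>Iset. dI s t \<le> MI" using dI_bounded by blast
  obtain F where fF: "\<forall>x\<in>Omega. \<bar>f x\<bar> \<le> F" and fH: "bdd_above (holder_quots dI \<theta> p \<beta> f)"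
    and fC: "f \<in> Ccont dI \<theta>"
    using f_in unfolding Cbeta_def by blast
  have bpos: "0 < b"
  proof -
    have "p \<in> {s \<in> Iset. \<tau> s = p}" using fixed_pt by simp
    then have "p \<in> (\<lambda>i. \<zeta> i p) ` {..<b}" using full_branches fixed_pt by blast
    then show ?thesis by auto
  qed
  interpret PF dI \<theta> \<eta> \<beta> p MI F \<zeta> b f
    using dI_metric MI theta eta beta fixed_pt branches_in contraction bpos fF fH
    by unfold_locales auto
  interpret M: Metric_space Omega D by (rule metric_space)
  interpret nu: prob_space \<nu>0 by (rule nu_prob)
  have PhiC: "\<Phi> \<in> Ccont dI \<theta>" and Phi0: "\<forall>x\<in>Omega. 0 \<le> \<Phi> x" and Phi1: "integral\<^sup>L \<nu>0 \<Phi> = 1"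
    and PhiB: "\<forall>x\<in>Omega. \<forall>y\<in>Omega. \<Phi> x \<le> B (D x y) * \<Phi> y"
    using Phi_in unfolding Delta_f_def by auto
  have r: "ratio \<Phi>" unfolding ratio_def using Phi0 PhiB by auto
  define y0 where "y0 = (\<lambda>_::int. 0::real)"
  have y0: "y0 \<in> Omega" unfolding y0_def Omega_def Iset_def by auto
  define C where "C = B MI * \<Phi> y0"
  have C: "\<forall>u\<in>Omega. \<Phi> u \<le> C"
  proof
    fix u assume u: "u \<in> Omega"
    have "\<Phi> u \<le> B (D u y0) * \<Phi> y0" using PhiB u y0 by auto
    also have "\<dots> \<le> B MI * \<Phi> y0" using B_mono[OF D_nonneg D_bound] Phi0 y0 by (intro mult_right_mono) auto
    finally show "\<Phi> u \<le> C" unfolding C_def .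
  qed
  have C0: "0 \<le> C" using C Phi0 y0 by force
  have oneC: "(\<lambda>_. 1) \<in> Ccont dI \<theta>" unfolding Ccont_def by simp
  define lam where "lam = integral\<^sup>L \<nu>0 (Pop \<zeta> b p f (\<lambda>_. 1))"
  have int1: "integrable \<nu>0 (Pop \<zeta> b p f (\<lambda>_. 1))" using nu_eigen oneC by auto
  have lam_pos: "0 < lam"
  proof -
    have "integral\<^sup>L \<nu>0 (\<lambda>_. exp (- F)) \<le> lam" unfolding lam_def
      using int1 Pop_one_lower nu_space by (intro integral_mono) auto
    moreover have "integral\<^sup>L \<nu>0 (\<lambda>_. exp (- F)) = exp (- F)" using nu.prob_space by simp
    ultimately show ?thesis by (metis exp_gt_zero less_le_trans)
  qed
  have PhiInt: "integral\<^sup>L \<nu>0 (Pop \<zeta> b p f \<Phi>) = lam"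
    using nu_eigen PhiC C Phi0 Phi1 unfolding lam_def
    by (metis abs_of_nonneg mult.right_neutral)
  define R where "R = (\<lambda>x. Pop \<zeta> b p f \<Phi> x / lam)"
  define Cr where "Cr = exp F * C / lam"
  have R0: "\<forall>x\<in>Omega. 0 \<le> R x" unfolding R_def using Pop_bounds(1)[OF _ r C] lam_pos by auto
  have RC: "\<forall>x\<in>Omega. R x \<le> Cr" unfolding R_def Cr_def using Pop_bounds(2)[OF _ r C] lam_pos
    by (auto intro: divide_right_mono)
  have RB: "\<forall>x\<in>Omega. \<forall>y\<in>Omega. R x \<le> B (D x y) * R y"
  proof (intro ballI)
    fix x y assume xy: "x \<in> Omega" "y \<in> Omega"
    have "Pop \<zeta> b p f \<Phi> x / lam \<le> B (D x y) * Pop \<zeta> b p f \<Phi> y / lam"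
      using Pop_ineq[OF xy r C] lam_pos by (intro divide_right_mono) auto
    then show "R x \<le> B (D x y) * R y" unfolding R_def by simp
  qed
  define K where "K = cB * exp (cB * MI powr \<beta>) * Cr"
  have K0: "0 \<le> K" unfolding K_def Cr_def using cB_nonneg C0 lam_pos by auto
  have Rhold: "\<bar>R a - R x\<bar> \<le> K * D a x powr \<beta>" if ax: "a \<in> Omega" "x \<in> Omega" for a x
  proof -
    have h2: "R x \<le> B (D a x) * R a" using RB ax M.commute[of x a] by metis
    have "\<bar>R a - R x\<bar> \<le> (B (D a x) - 1) * Cr"
      using R0 RC RB ax B_ge1 h2 by (intro ratio_diff) auto
    also have "\<dots> \<le> (cB * exp (cB * MI powr \<beta>) * D a x powr \<beta>) * Cr"
      using B_minus_one[OF D_nonneg D_bound] RC R0 ax by (intro mult_right_mono) force+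
    finally show ?thesis unfolding K_def by (simp add: algebra_simps)
  qed
  have cont: "R \<in> Ccont dI \<theta>"
  proof -
    have "continuous_map M.mtopology (Metric_space.mtopology UNIV dist) R"
    proof (subst M.metric_continuous_map[OF Met_TC.Metric_space_axioms], intro conjI ballI allI impI)
      show "R ` Omega \<subseteq> UNIV" by simp
      fix a and \<epsilon> :: real assume a: "a \<in> Omega" and e: "0 < \<epsilon>"
      define \<delta> where "\<delta> = (\<epsilon> / (K + 1)) powr (1 / \<beta>)"
      have eK: "0 < \<epsilon> / (K + 1)" using e K0 by simp
      have d0: "0 < \<delta>" unfolding \<delta>_def using eK by (simp only: powr_gt_zero)
      have dpow: "\<delta> powr \<beta> = \<epsilon> / (K + 1)" unfolding \<delta>_def using eK beta e K0 by (simp add: powr_powr)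
      show "\<exists>\<delta>>0. \<forall>x. x \<in> Omega \<and> D a x < \<delta> \<longrightarrow> dist (R a) (R x) < \<epsilon>"
      proof (intro exI[of _ \<delta>] conjI allI impI d0)
        fix x assume x: "x \<in> Omega \<and> D a x < \<delta>"
        have "D a x powr \<beta> \<le> \<delta> powr \<beta>" using x D_nonneg beta by (intro powr_mono2) auto
        then have "K * D a x powr \<beta> \<le> K * (\<epsilon> / (K + 1))" using K0 dpow by (intro mult_left_mono) auto
        also have "\<dots> < \<epsilon>" using K0 e by (simp add: field_simps)
        finally have "K * D a x powr \<beta> < \<epsilon>" .
        moreover have "\<bar>R a - R x\<bar> \<le> K * D a x powr \<beta>" using Rhold[OF a] x by blast
        ultimately show "dist (R a) (R x) < \<epsilon>" by (simp add: dist_real_def)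
      qed
    qed
    then show ?thesis unfolding Ccont_def Otop_def by simp
  qed
  have "integral\<^sup>L \<nu>0 R = 1" unfolding R_def integral_divide_zero PhiInt using lam_pos by simp
  then show ?thesis
    using cont R0 RB unfolding lam_def R_def Delta_f_def by auto
qed

end
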